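(* Let $\mathcal G$ be a graph. An agglomeration $a\in\mathbf A(\mathcal G)$ is an atom of $\mathbf A(\mathcal G)$ if and only if $a=\mathbf 1_{\mathcal G'}$ for a non-null, connected subgraph $\mathcal G'$ of $\mathcal G$.
   Context: A graph $\mathcal G=(V,E,r)$ consists of a finite vertex set $V$, a finite edge set $E$ disjoint from $V$, and a map $r$ assigning to each edge a two-element subset of $V$; multiple edges allowed, no loops. An agglomeration on $\mathcal G$ is a function $a\colon V\cup E\to\mathbb N_0$ with $a(v)\ge a(e)$ whenever $v$ is incident with $e$; $\mathbf A(\mathcal G)$ is the monoid of agglomerations under pointwise addition. For a subgraph $\mathcal G'$, $\mathbf 1_{\mathcal G'}$ is $1$ on vertices and edges of $\mathcal G'$ and $0$ elsewhere. An atom is a nonzero element that cannot be written as a sum of two nonzero elements. *)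

theory Defs
  imports Main
begin

text \<open>A graph: finite vertex set V (of type 'v), finite edge set E (of type 'e; disjointness
  of V and E is automatic since they live in different types), and r assigning to each edge
  a two-element subset of V. Multiple edges allowed, no loops.\<close>
definition is_graph :: "'v set \<Rightarrow> 'e set \<Rightarrow> ('e \<Rightarrow> 'v set) \<Rightarrow> bool" where
  "is_graph V E r \<longleftrightarrow> finite V \<and> finite E \<and> (\<forall>e\<in>E. r e \<subseteq> V \<and> card (r e) = 2)"

text \<open>Functions on V \<union> E are represented as functions on the disjoint sum 'v + 'e
  which vanish outside Inl ` V \<union> Inr ` E.\<close>
definition agglomeration :: "'v set \<Rightarrow> 'e set \<Rightarrow> ('e \<Rightarrow> 'v set) \<Rightarrow> ('v + 'e \<Rightarrow> nat) \<Rightarrow> bool" where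
  "agglomeration V E r a \<longleftrightarrow>
     (\<forall>x. x \<notin> Inl ` V \<union> Inr ` E \<longrightarrow> a x = 0) \<and>
     (\<forall>e\<in>E. \<forall>v\<in>r e. a (Inr e) \<le> a (Inl v))"

definition agg_set :: "'v set \<Rightarrow> 'e set \<Rightarrow> ('e \<Rightarrow> 'v set) \<Rightarrow> ('v + 'e \<Rightarrow> nat) set" ("\<A>") where
  "\<A> V E r = {a. agglomeration V E r a}"

definition is_atom :: "'v set \<Rightarrow> 'e set \<Rightarrow> ('e \<Rightarrow> 'v set) \<Rightarrow> ('v + 'e \<Rightarrow> nat) \<Rightarrow> bool" where
  "is_atom V E r a \<longleftrightarrow> a \<in> \<A> V E r \<and> a \<noteq> (\<lambda>_. 0) \<and>
     \<not> (\<exists>b\<in>\<A> V E r. \<exists>c\<in>\<A> V E r. b \<noteq> (\<lambda>_. 0) \<and> c \<noteq> (\<lambda>_. 0) \<and> a = (\<lambda>x. b x + c x))"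

definition is_subgraph :: "'v set \<Rightarrow> 'e set \<Rightarrow> ('e \<Rightarrow> 'v set) \<Rightarrow> 'v set \<Rightarrow> 'e set \<Rightarrow> bool" where
  "is_subgraph V E r V' E' \<longleftrightarrow> V' \<subseteq> V \<and> E' \<subseteq> E \<and> (\<forall>e\<in>E'. r e \<subseteq> V')"

definition adj :: "('e \<Rightarrow> 'v set) \<Rightarrow> 'e set \<Rightarrow> ('v \<times> 'v) set" where
  "adj r E' = {(u, w). \<exists>e\<in>E'. r e = {u, w}}"

definition connected_graph :: "'v set \<Rightarrow> 'e set \<Rightarrow> ('e \<Rightarrow> 'v set) \<Rightarrow> bool" where
  "connected_graph V' E' r \<longleftrightarrow> (\<forall>u\<in>V'. \<forall>w\<in>V'. (u, w) \<in> (adj r E')\<^sup>*)"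

definition indic :: "'v set \<Rightarrow> 'e set \<Rightarrow> ('v + 'e \<Rightarrow> nat)" where
  "indic V' E' = (\<lambda>x. case x of Inl v \<Rightarrow> (if v \<in> V' then 1 else 0)
                               | Inr e \<Rightarrow> (if e \<in> E' then 1 else 0))"

end

theory Submission
  imports Defs
begin

lemma nz_vertex:
  assumes g: "is_graph V E r" and ag: "agglomeration V E r b" and nz: "b \<noteq> (\<lambda>_. 0)"
  shows "\<exists>v. b (Inl v) > 0"
proof -
  obtain x where x: "b x \<noteq> 0" using nz by auto
  show ?thesis
  proof (cases x)
    case (Inl v) then show ?thesis using x by auto
  next
    case (Inr e)
    have "e \<in> E" using ag x Inr unfolding agglomeration_def by auto
    then have "card (r e) = 2" using g unfolding is_graph_def by auto
    then have "r e \<noteq> {}" by auto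
    then obtain v where "v \<in> r e" by auto
    then have "b (Inr e) \<le> b (Inl v)" using ag \<open>e \<in> E\<close> unfolding agglomeration_def by auto
    then have "b (Inl v) > 0" using x Inr by auto
    then show ?thesis by blast
  qed
qed

lemma edge_pair:
  assumes g: "is_graph V E r" and "e \<in> E" and "v \<in> r e"
  shows "\<exists>w. r e = {v, w}"
proof -
  have "card (r e) = 2" using assms unfolding is_graph_def by auto
  then obtain x y where "x \<noteq> y" "r e = {x, y}" by (auto simp: card_Suc_eq numeral_2_eq_2)
  then show ?thesis using assms(3) by auto
qed

lemma indic_simps[simp]:
  "indic V' E' (Inl v) = (if v \<in> V' then 1 else 0)"
  "indic V' E' (Inr e) = (if e \<in> E' then 1 else 0)"
  by (auto simp: indic_def)

theorem proposition4p5: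
  fixes V :: "'v set" and E :: "'e set" and r :: "'e \<Rightarrow> 'v set" and a :: "'v + 'e \<Rightarrow> nat"
  assumes "is_graph V E r"
    and "a \<in> \<A> V E r"
  shows "is_atom V E r a \<longleftrightarrow>
    (\<exists>V' E'. is_subgraph V E r V' E' \<and> V' \<noteq> {} \<and> connected_graph V' E' r \<and> a = indic V' E')"
proof
  assume at: "is_atom V E r a"
  have ag: "agglomeration V E r a" using assms(2) by (simp add: agg_set_def)
  have anz: "a \<noteq> (\<lambda>_. 0)" using at by (simp add: is_atom_def)
  have noDec: "\<And>b c. agglomeration V E r b \<Longrightarrow> agglomeration V E r c \<Longrightarrow> b \<noteq> (\<lambda>_. 0)
     \<Longrightarrow> c \<noteq> (\<lambda>_. 0) \<Longrightarrow> a = (\<lambda>x. b x + c x) \<Longrightarrow> False"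
    using at unfolding is_atom_def agg_set_def by blast
  define S where "S = {v\<in>V. a (Inl v) > 0}"
  define F where "F = {e\<in>E. a (Inr e) > 0}"
  have FS: "\<And>e v. e \<in> F \<Longrightarrow> v \<in> r e \<Longrightarrow> v \<in> S"
  proof -
    fix e v assume "e \<in> F" "v \<in> r e"
    then have "a (Inr e) \<le> a (Inl v)" "a (Inr e) > 0" "r e \<subseteq> V"
      using ag assms(1) unfolding agglomeration_def F_def is_graph_def by auto
    then show "v \<in> S" using \<open>v \<in> r e\<close> unfolding S_def by auto
  qed
  have agI: "agglomeration V E r (indic S F)"
    unfolding agglomeration_def
  proof (intro conjI allI ballI impI)
    fix x assume "x \<notin> Inl ` V \<union> Inr ` E" then show "indic S F x = 0"
      by (cases x) (auto simp: S_def F_def)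
  next
    fix e v assume "e \<in> E" "v \<in> r e" then show "indic S F (Inr e) \<le> indic S F (Inl v)"
      using FS by auto
  qed
  have a_eq: "a = indic S F"
  proof (rule ccontr)
    assume ne: "a \<noteq> indic S F"
    obtain v where v: "a (Inl v) > 0" using nz_vertex[OF assms(1) ag anz] by auto
    have "v \<in> V" 
    proof (rule ccontr)
      assume "v \<notin> V"
      then have "Inl v \<notin> Inl ` V \<union> Inr ` E" by auto
      then show False using v ag unfolding agglomeration_def by auto
    qed
    then have "indic S F (Inl v) = 1" using v unfolding S_def by simp
    then have "indic S F \<noteq> (\<lambda>_. 0)" by (intro notI) simp
    moreover have "(\<lambda>x. a x - indic S F x) \<noteq> (\<lambda>_. 0)"
    proof
      assume h: "(\<lambda>x. a x - indic S F x) = (\<lambda>_. 0)"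
      have "a = indic S F"
      proof
        fix x
        have "a x - indic S F x = 0" using h by meson
        moreover have "indic S F x \<le> a x"
          using ag by (cases x) (auto simp: S_def F_def agglomeration_def)
        moreover have "indic S F x \<le> 1" by (cases x) auto
        moreover have "a x = 0 \<Longrightarrow> indic S F x = 0"
          using ag by (cases x) (auto simp: S_def F_def)
        ultimately show "a x = indic S F x" by (cases x) (auto simp: S_def F_def split: if_splits)
      qed
      then show False using ne by simp
    qed
    moreover have "agglomeration V E r (\<lambda>x. a x - indic S F x)"
      unfolding agglomeration_def
    proof (intro conjI allI ballI impI)
      fix x assume "x \<notin> Inl ` V \<union> Inr ` E" then show "a x - indic S F x = 0"
        using ag unfolding agglomeration_def by auto
    next
      fix e v assume ev: "e \<in> E" "v \<in> r e"
      have le: "a (Inr e) \<le> a (Inl v)" using ag ev unfolding agglomeration_def by auto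
      have "v \<in> V" using assms(1) ev unfolding is_graph_def by auto
      show "a (Inr e) - indic S F (Inr e) \<le> a (Inl v) - indic S F (Inl v)"
        using le ev \<open>v \<in> V\<close> by (auto simp: S_def F_def)
    qed
    moreover have "a = (\<lambda>x. indic S F x + (a x - indic S F x))"
    proof
      fix x show "a x = indic S F x + (a x - indic S F x)"
        using ag by (cases x) (auto simp: S_def F_def agglomeration_def)
    qed
    ultimately show False using noDec agI by blast
  qed
  have sub: "is_subgraph V E r S F"
    unfolding is_subgraph_def using FS by (auto simp: S_def F_def)
  have Sne: "S \<noteq> {}"
  proof -
    obtain v where v: "a (Inl v) > 0" using nz_vertex[OF assms(1) ag anz] by blast
    have "a (Inl v) = indic S F (Inl v)" using a_eq by (rule arg_cong)
    then have "v \<in> S" using v by (cases "v \<in> S") auto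
    then show ?thesis by blast
  qed
  have conn: "connected_graph S F r"
    unfolding connected_graph_def
  proof (rule ccontr)
    assume "\<not> (\<forall>u\<in>S. \<forall>w\<in>S. (u, w) \<in> (adj r F)\<^sup>*)"
    then obtain u w where uw: "u \<in> S" "w \<in> S" "(u, w) \<notin> (adj r F)\<^sup>*" by auto
    define C where "C = {x\<in>S. (u, x) \<in> (adj r F)\<^sup>*}"
    define FC where "FC = {e\<in>F. r e \<subseteq> C}"
    have clos: "\<And>e v. e \<in> F \<Longrightarrow> v \<in> r e \<Longrightarrow> v \<in> C \<Longrightarrow> r e \<subseteq> C"
    proof
      fix e v x assume h: "e \<in> F" "v \<in> r e" "v \<in> C" "x \<in> r e"
      have "e \<in> E" using h F_def by auto
      obtain y where y: "r e = {v, y}" using edge_pair[OF assms(1) \<open>e \<in> E\<close> h(2)] by auto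
      have "(v, y) \<in> adj r F" using y h(1) unfolding adj_def by auto
      moreover have "(u, v) \<in> (adj r F)\<^sup>*" using h(3) unfolding C_def by simp
      ultimately have "(u, y) \<in> (adj r F)\<^sup>*" by (rule rtrancl.rtrancl_into_rtrancl[rotated])
      moreover have "y \<in> S" using FS h(1) y by auto
      ultimately have "y \<in> C" unfolding C_def by auto
      then show "x \<in> C" using h y by auto
    qed
    have C_S: "C \<subseteq> S" unfolding C_def by auto
    have b_ag: "agglomeration V E r (indic C FC)"
      unfolding agglomeration_def
    proof (intro conjI allI ballI impI)
      fix x assume "x \<notin> Inl ` V \<union> Inr ` E" then show "indic C FC x = 0"
        using C_S by (cases x) (auto simp: S_def F_def FC_def)
    next
      fix e v assume "e \<in> E" "v \<in> r e" then show "indic C FC (Inr e) \<le> indic C FC (Inl v)"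
        by (auto simp: FC_def)
    qed
    have c_ag: "agglomeration V E r (indic (S - C) (F - FC))"
      unfolding agglomeration_def
    proof (intro conjI allI ballI impI)
      fix x assume "x \<notin> Inl ` V \<union> Inr ` E" then show "indic (S - C) (F - FC) x = 0"
        by (cases x) (auto simp: S_def F_def FC_def)
    next
      fix e v assume ev: "e \<in> E" "v \<in> r e"
      show "indic (S - C) (F - FC) (Inr e) \<le> indic (S - C) (F - FC) (Inl v)"
      proof (cases "e \<in> F - FC")
        case True
        then have "v \<in> S" using FS ev by auto
        moreover have "v \<notin> C" using clos True ev unfolding FC_def by auto
        ultimately show ?thesis using True by auto
      qed auto
    qed
    have "u \<in> C" using uw unfolding C_def by auto
    then have "indic C FC (Inl u) = 1" by simp
    then have bnz: "indic C FC \<noteq> (\<lambda>_. 0)" by (intro notI) simp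
    have "w \<notin> C" using uw unfolding C_def by auto
    then have "w \<in> S - C" using uw by auto
    then have "indic (S - C) (F - FC) (Inl w) = 1" by simp
    then have cnz: "indic (S - C) (F - FC) \<noteq> (\<lambda>_. 0)" by (intro notI) simp
    have "a = (\<lambda>x. indic C FC x + indic (S - C) (F - FC) x)"
    proof
      fix x show "a x = indic C FC x + indic (S - C) (F - FC) x"
        using a_eq C_S by (cases x) (auto simp: FC_def)
    qed
    then show False using noDec b_ag c_ag bnz cnz by blast
  qed
  show "\<exists>V' E'. is_subgraph V E r V' E' \<and> V' \<noteq> {} \<and> connected_graph V' E' r \<and> a = indic V' E'"
    using sub Sne conn a_eq by blast
next
  assume "\<exists>V' E'. is_subgraph V E r V' E' \<and> V' \<noteq> {} \<and> connected_graph V' E' r \<and> a = indic V' E'"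
  then obtain V' E' where sub: "is_subgraph V E r V' E'" and ne: "V' \<noteq> {}"
    and conn: "connected_graph V' E' r" and aeq: "a = indic V' E'" by blast
  obtain v0 where "v0 \<in> V'" using ne by blast
  then have "a (Inl v0) = 1" using aeq by simp
  then have anz: "a \<noteq> (\<lambda>_. 0)" by (intro notI) simp
  have "\<not> (\<exists>b\<in>\<A> V E r. \<exists>c\<in>\<A> V E r. b \<noteq> (\<lambda>_. 0) \<and> c \<noteq> (\<lambda>_. 0) \<and> a = (\<lambda>x. b x + c x))"
  proof
    assume "\<exists>b\<in>\<A> V E r. \<exists>c\<in>\<A> V E r. b \<noteq> (\<lambda>_. 0) \<and> c \<noteq> (\<lambda>_. 0) \<and> a = (\<lambda>x. b x + c x)"
    then obtain b c where bag: "agglomeration V E r b" and cag: "agglomeration V E r c"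
      and bnz: "b \<noteq> (\<lambda>_. 0)" and cnz: "c \<noteq> (\<lambda>_. 0)" and sum: "a = (\<lambda>x. b x + c x)"
      unfolding agg_set_def by blast
    have ax: "\<And>x. b x + c x = a x" using sum by simp
    have a1: "\<And>x. a x \<le> 1" using aeq by (simp add: indic_def split: sum.split)
    obtain u where u: "b (Inl u) > 0" using nz_vertex[OF assms(1) bag bnz] by auto
    obtain w where w: "c (Inl w) > 0" using nz_vertex[OF assms(1) cag cnz] by auto
    have uV: "u \<in> V'" using u ax[of "Inl u"] aeq by (auto split: if_splits)
    have wV: "w \<in> V'" using w ax[of "Inl w"] aeq by (auto split: if_splits)
    have path: "(u, w) \<in> (adj r E')\<^sup>*" using conn uV wV unfolding connected_graph_def by auto
    have "b (Inl w) > 0" using path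
    proof (induction rule: rtrancl_induct)
      case base then show ?case using u .
    next
      case (step x y)
      obtain e where e: "e \<in> E'" "r e = {x, y}" using step.hyps(2) unfolding adj_def by auto
      have eE: "e \<in> E" using sub e unfolding is_subgraph_def by auto
      have "a (Inr e) = 1" using aeq e by simp
      have "c (Inr e) = 0"
      proof (rule ccontr)
        assume "c (Inr e) \<noteq> 0"
        moreover have "c (Inr e) \<le> c (Inl x)" using cag eE e unfolding agglomeration_def by blast
        ultimately have "c (Inl x) > 0" by linarith
        then show False using step.IH ax[of "Inl x"] a1[of "Inl x"] by linarith
      qed
      then have "b (Inr e) = 1" using ax[of "Inr e"] \<open>a (Inr e) = 1\<close> by simp
      moreover have "b (Inr e) \<le> b (Inl y)" using bag eE e unfolding agglomeration_def by blast
      ultimately show ?case by linarith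
    qed
    then show False using w ax[of "Inl w"] a1[of "Inl w"] by linarith
  qed
  then show "is_atom V E r a" using assms(2) anz unfolding is_atom_def by blast
qed

end
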